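(* Let $Q$ be a finite quiver without oriented cycles, $k$ a field, and $I$ an admissible ideal of the path algebra $kQ$. Let $d\colon kQ\to kQ$ be a $k$-linear map such that $d(I)\subseteq I$ and such that for every path $u$ of $Q$ there is $t_u\in k$ with $d(u)=t_uu$. Let $\equiv_I$ be the smallest equivalence relation on the set of paths of $Q$ such that $u\equiv_I v$ whenever $u,v$ appear with nonzero coefficient in a same minimal relation of $I$. Then for all paths $u,v$, $u\equiv_I v$ implies $t_u=t_v$.
   Context: An ideal $I$ of $kQ$ is admissible if $(kQ^+)^N\subseteq I\subseteq(kQ^+)^2$ for some $N\ge 2$, where $kQ^+$ is the ideal generated by the arrows. A minimal relation of $I$ is a nonzero element $\sum_{i=1}^st_iu_i\in I$ with $t_i\in k^*$ and $u_i$ pairwise distinct paths such that no nonempty proper subsum $\sum_{i\in S}t_iu_i$ lies in $I$. *)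

theory Defs
  imports Main "HOL-Library.Function_Algebras"
begin

text \<open>A path is a pair (x, as): a start vertex x and a list of arrows a1 ... an, composed
left to right (t(a_i) = s(a_{i+1})); the empty list gives the trivial path e_x.\<close>

definition quiver :: "'v set \<Rightarrow> 'a set \<Rightarrow> ('a \<Rightarrow> 'v) \<Rightarrow> ('a \<Rightarrow> 'v) \<Rightarrow> bool" where
  "quiver V A s t \<longleftrightarrow> (\<forall>a\<in>A. s a \<in> V \<and> t a \<in> V)"

definition finite_quiver :: "'v set \<Rightarrow> 'a set \<Rightarrow> ('a \<Rightarrow> 'v) \<Rightarrow> ('a \<Rightarrow> 'v) \<Rightarrow> bool" where
  "finite_quiver V A s t \<longleftrightarrow> quiver V A s t \<and> finite V \<and> finite A"

definition is_path :: "'v set \<Rightarrow> 'a set \<Rightarrow> ('a \<Rightarrow> 'v) \<Rightarrow> ('a \<Rightarrow> 'v) \<Rightarrow> 'v \<times> 'a list \<Rightarrow> bool" where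
  "is_path V A s t p \<longleftrightarrow> (case p of (x, as) \<Rightarrow>
     x \<in> V \<and> set as \<subseteq> A \<and> (as \<noteq> [] \<longrightarrow> s (hd as) = x) \<and>
     (\<forall>i. Suc i < length as \<longrightarrow> t (as ! i) = s (as ! Suc i)))"

definition paths :: "'v set \<Rightarrow> 'a set \<Rightarrow> ('a \<Rightarrow> 'v) \<Rightarrow> ('a \<Rightarrow> 'v) \<Rightarrow> ('v \<times> 'a list) set" where
  "paths V A s t = {p. is_path V A s t p}"

definition path_end :: "('a \<Rightarrow> 'v) \<Rightarrow> 'v \<times> 'a list \<Rightarrow> 'v" where
  "path_end t p = (case p of (x, as) \<Rightarrow> if as = [] then x else t (last as))"

definition acyclic_quiver :: "'v set \<Rightarrow> 'a set \<Rightarrow> ('a \<Rightarrow> 'v) \<Rightarrow> ('a \<Rightarrow> 'v) \<Rightarrow> bool" where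
  "acyclic_quiver V A s t \<longleftrightarrow>
     (\<forall>x as. is_path V A s t (x, as) \<and> as \<noteq> [] \<longrightarrow> path_end t (x, as) \<noteq> x)"

definition path_alg :: "'v set \<Rightarrow> 'a set \<Rightarrow> ('a \<Rightarrow> 'v) \<Rightarrow> ('a \<Rightarrow> 'v) \<Rightarrow> ('v \<times> 'a list \<Rightarrow> 'k::field) set" where
  "path_alg V A s t = {f. (\<forall>p. f p \<noteq> 0 \<longrightarrow> p \<in> paths V A s t) \<and> finite {p. f p \<noteq> 0}}"

text \<open>Multiplication in kQ: (f g)(p) = sum over factorisations p = q r of f(q) g(r).\<close>
definition pmult :: "('a \<Rightarrow> 'v) \<Rightarrow> ('v \<times> 'a list \<Rightarrow> 'k::field) \<Rightarrow> ('v \<times> 'a list \<Rightarrow> 'k) \<Rightarrow> ('v \<times> 'a list \<Rightarrow> 'k)" where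
  "pmult t f g = (\<lambda>p. case p of (x, cs) \<Rightarrow>
     (\<Sum>i\<in>{0..length cs}. f (x, take i cs) * g (path_end t (x, take i cs), drop i cs)))"

definition pbasis :: "'v \<times> 'a list \<Rightarrow> ('v \<times> 'a list \<Rightarrow> 'k::field)" where
  "pbasis u = (\<lambda>q. if q = u then 1 else 0)"

definition scal :: "'k::field \<Rightarrow> ('p \<Rightarrow> 'k) \<Rightarrow> ('p \<Rightarrow> 'k)" where
  "scal c f = (\<lambda>p. c * f p)"

definition is_ideal :: "'v set \<Rightarrow> 'a set \<Rightarrow> ('a \<Rightarrow> 'v) \<Rightarrow> ('a \<Rightarrow> 'v) \<Rightarrow> ('v \<times> 'a list \<Rightarrow> 'k::field) set \<Rightarrow> bool" where
  "is_ideal V A s t I \<longleftrightarrow> I \<subseteq> path_alg V A s t \<and> 0 \<in> I \<and>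
     (\<forall>f\<in>I. \<forall>g\<in>I. f + g \<in> I) \<and> (\<forall>c. \<forall>f\<in>I. scal c f \<in> I) \<and>
     (\<forall>f\<in>I. \<forall>g\<in>path_alg V A s t. pmult t g f \<in> I \<and> pmult t f g \<in> I)"

definition gen_ideal :: "'v set \<Rightarrow> 'a set \<Rightarrow> ('a \<Rightarrow> 'v) \<Rightarrow> ('a \<Rightarrow> 'v) \<Rightarrow> ('v \<times> 'a list \<Rightarrow> 'k::field) set \<Rightarrow> ('v \<times> 'a list \<Rightarrow> 'k) set" where
  "gen_ideal V A s t S = \<Inter>{J. is_ideal V A s t J \<and> S \<subseteq> J}"

definition ideal_prod :: "'v set \<Rightarrow> 'a set \<Rightarrow> ('a \<Rightarrow> 'v) \<Rightarrow> ('a \<Rightarrow> 'v) \<Rightarrow> ('v \<times> 'a list \<Rightarrow> 'k::field) set \<Rightarrow> ('v \<times> 'a list \<Rightarrow> 'k) set \<Rightarrow> ('v \<times> 'a list \<Rightarrow> 'k) set" where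
  "ideal_prod V A s t J K = gen_ideal V A s t {pmult t f g | f g. f \<in> J \<and> g \<in> K}"

fun ideal_pow :: "'v set \<Rightarrow> 'a set \<Rightarrow> ('a \<Rightarrow> 'v) \<Rightarrow> ('a \<Rightarrow> 'v) \<Rightarrow> ('v \<times> 'a list \<Rightarrow> 'k::field) set \<Rightarrow> nat \<Rightarrow> ('v \<times> 'a list \<Rightarrow> 'k) set" where
  "ideal_pow V A s t J 0 = path_alg V A s t"
| "ideal_pow V A s t J (Suc n) = ideal_prod V A s t (ideal_pow V A s t J n) J"

definition arrow_ideal :: "'v set \<Rightarrow> 'a set \<Rightarrow> ('a \<Rightarrow> 'v) \<Rightarrow> ('a \<Rightarrow> 'v) \<Rightarrow> ('v \<times> 'a list \<Rightarrow> 'k::field) set" where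
  "arrow_ideal V A s t = gen_ideal V A s t {pbasis (s a, [a]) | a. a \<in> A}"

definition admissible :: "'v set \<Rightarrow> 'a set \<Rightarrow> ('a \<Rightarrow> 'v) \<Rightarrow> ('a \<Rightarrow> 'v) \<Rightarrow> ('v \<times> 'a list \<Rightarrow> 'k::field) set \<Rightarrow> bool" where
  "admissible V A s t I \<longleftrightarrow> is_ideal V A s t I \<and>
     (\<exists>N\<ge>2. ideal_pow V A s t (arrow_ideal V A s t) N \<subseteq> I \<and>
            I \<subseteq> ideal_pow V A s t (arrow_ideal V A s t) 2)"

definition minimal_relation :: "('v \<times> 'a list \<Rightarrow> 'k::field) set \<Rightarrow> ('v \<times> 'a list \<Rightarrow> 'k) \<Rightarrow> bool" where
  "minimal_relation I r \<longleftrightarrow> r \<in> I \<and> r \<noteq> 0 \<and>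
     (\<forall>S. S \<noteq> {} \<and> S \<subset> {p. r p \<noteq> 0} \<longrightarrow> (\<lambda>p. if p \<in> S then r p else 0) \<notin> I)"

definition minrel_pairs :: "('v \<times> 'a list \<Rightarrow> 'k::field) set \<Rightarrow> (('v \<times> 'a list) \<times> ('v \<times> 'a list)) set" where
  "minrel_pairs I = {(u, v). \<exists>r. minimal_relation I r \<and> r u \<noteq> 0 \<and> r v \<noteq> 0}"

definition equiv_I :: "'v set \<Rightarrow> 'a set \<Rightarrow> ('a \<Rightarrow> 'v) \<Rightarrow> ('a \<Rightarrow> 'v) \<Rightarrow> ('v \<times> 'a list \<Rightarrow> 'k::field) set \<Rightarrow> (('v \<times> 'a list) \<times> ('v \<times> 'a list)) set" where
  "equiv_I V A s t I = \<Inter>{E. equiv (paths V A s t) E \<and> minrel_pairs I \<subseteq> E}"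

definition k_linear_on :: "'v set \<Rightarrow> 'a set \<Rightarrow> ('a \<Rightarrow> 'v) \<Rightarrow> ('a \<Rightarrow> 'v) \<Rightarrow> (('v \<times> 'a list \<Rightarrow> 'k::field) \<Rightarrow> ('v \<times> 'a list \<Rightarrow> 'k)) \<Rightarrow> bool" where
  "k_linear_on V A s t d \<longleftrightarrow>
     (\<forall>f\<in>path_alg V A s t. d f \<in> path_alg V A s t) \<and>
     (\<forall>f\<in>path_alg V A s t. \<forall>g\<in>path_alg V A s t. d (f + g) = d f + d g) \<and>
     (\<forall>c. \<forall>f\<in>path_alg V A s t. d (scal c f) = scal c (d f))"

end

theory Submission
  imports Defs
begin

lemma diag_lemma:
  fixes g :: "'v \<times> 'a list \<Rightarrow> 'k::field"
  assumes lin: "k_linear_on V A s t d"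
    and db: "\<forall>u\<in>paths V A s t. d (pbasis u) = scal (tu u) (pbasis u)"
    and g: "g \<in> path_alg V A s t"
  shows "d g = (\<lambda>p. tu p * g p)"
proof -
  have fin: "finite {p. g p \<noteq> 0}" using g unfolding path_alg_def by auto
  have z: "(0::'v \<times> 'a list \<Rightarrow> 'k) \<in> path_alg V A s t" unfolding path_alg_def by auto
  have d0: "d 0 = 0"
  proof -
    have "d (0 + 0) = d 0 + d 0" using lin z unfolding k_linear_on_def by blast
    thus ?thesis by simp
  qed
  have "\<And>g. {p. g p \<noteq> 0} = F \<Longrightarrow> g \<in> path_alg V A s t \<Longrightarrow> d g = (\<lambda>p. tu p * g p)"
    if "finite F" for F using that
  proof (induction F rule: finite_induct)
    case empty
    then have "g = 0" by (auto simp: fun_eq_iff)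
    then show ?case using d0 by (simp add: zero_fun_def)
  next
    case (insert x F)
    define g' where "g' = g(x := 0)"
    have "g x \<noteq> 0" using insert.prems(1) by blast
    then have xp: "x \<in> paths V A s t" using insert.prems(2) unfolding path_alg_def by blast
    have sg': "{p. g' p \<noteq> 0} = F" using insert.prems insert.hyps unfolding g'_def by auto
    have g'a: "g' \<in> path_alg V A s t" using insert.prems(2) sg' insert.hyps(1)
      unfolding path_alg_def g'_def by (auto split: if_splits)
    have pb: "pbasis x \<in> path_alg V A s t" using xp unfolding path_alg_def pbasis_def by auto
    have sb: "scal (g x) (pbasis x) \<in> path_alg V A s t"
      using pb unfolding path_alg_def scal_def by auto
    have eq: "g = scal (g x) (pbasis x) + g'"
      by (auto simp: fun_eq_iff g'_def scal_def pbasis_def)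
    have "d g = d (scal (g x) (pbasis x)) + d g'"
      using lin sb g'a eq unfolding k_linear_on_def by metis
    also have "d (scal (g x) (pbasis x)) = scal (g x) (d (pbasis x))"
      using lin pb unfolding k_linear_on_def by blast
    also have "d g' = (\<lambda>p. tu p * g' p)" using insert.IH sg' g'a by blast
    finally show ?case using db xp
      by (auto simp: fun_eq_iff g'_def scal_def pbasis_def)
  qed
  thus ?thesis using fin g by blast
qed

lemma prod_lemma:
  assumes lin: "k_linear_on V A s t d"
    and db: "\<forall>u\<in>paths V A s t. d (pbasis u) = scal (tu u) (pbasis u)"
    and id: "is_ideal V A s t I"
    and dI: "\<forall>f\<in>I. d f \<in> I"
    and fin: "finite L"
    and f: "f \<in> I"
  shows "(\<lambda>p. (\<Prod>l\<in>L. tu p - l) * f p) \<in> I"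
  using fin
proof (induction L rule: finite_induct)
  case empty
  then show ?case using f by simp
next
  case (insert l L)
  let ?g = "(\<lambda>p. (\<Prod>l\<in>L. tu p - l) * f p)"
  have ga: "?g \<in> path_alg V A s t" using insert.IH id unfolding is_ideal_def by blast
  have "d ?g \<in> I" using dI insert.IH by blast
  moreover have "scal (-l) ?g \<in> I" using id insert.IH unfolding is_ideal_def by blast
  ultimately have "d ?g + scal (-l) ?g \<in> I" using id unfolding is_ideal_def by blast
  moreover have "d ?g + scal (-l) ?g = (\<lambda>p. (\<Prod>l\<in>insert l L. tu p - l) * f p)"
    using diag_lemma[OF lin db ga] insert.hyps
    by (auto simp: fun_eq_iff scal_def algebra_simps)
  ultimately show ?case by simp
qed

theorem lemma1p2:
  fixes V :: "'v set" and A :: "'a set" and s t :: "'a \<Rightarrow> 'v"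
    and I :: "('v \<times> 'a list \<Rightarrow> 'k::field) set"
    and d :: "('v \<times> 'a list \<Rightarrow> 'k) \<Rightarrow> ('v \<times> 'a list \<Rightarrow> 'k)"
    and tu :: "'v \<times> 'a list \<Rightarrow> 'k"
  assumes "finite_quiver V A s t"
    and "acyclic_quiver V A s t"
    and "admissible V A s t I"
    and "k_linear_on V A s t d"
    and "\<forall>f\<in>I. d f \<in> I"
    and "\<forall>u\<in>paths V A s t. d (pbasis u) = scal (tu u) (pbasis u)"
    and "(u, v) \<in> equiv_I V A s t I"
  shows "tu u = tu v"
proof -
  have id: "is_ideal V A s t I" using assms(3) unfolding admissible_def by blast
  define E where "E = {(x, y). x \<in> paths V A s t \<and> y \<in> paths V A s t \<and> tu x = tu y}"
  have eqE: "equiv (paths V A s t) E"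
    unfolding equiv_def refl_on_def sym_def trans_def E_def by auto
  have key: "tu p = tu u0" if mr: "minimal_relation I r" and u0: "r u0 \<noteq> 0" and p: "r p \<noteq> 0"
    for r u0 p
  proof -
    have rI: "r \<in> I" using mr unfolding minimal_relation_def by blast
    have ra: "r \<in> path_alg V A s t" using rI id unfolding is_ideal_def by blast
    define Sp where "Sp = {p. r p \<noteq> 0}"
    have finS: "finite Sp" using ra unfolding path_alg_def Sp_def by auto
    define L where "L = tu ` Sp - {tu u0}"
    have finL: "finite L" using finS unfolding L_def by auto
    define c where "c = (\<Prod>l\<in>L. tu u0 - l)"
    have c0: "c \<noteq> 0" unfolding c_def using finL by (auto simp: L_def)
    define S where "S = {p \<in> Sp. tu p = tu u0}"
    have gI: "(\<lambda>p. (\<Prod>l\<in>L. tu p - l) * r p) \<in> I"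
      using prod_lemma[OF assms(4) assms(6) id assms(5) finL rI] .
    have geq: "(\<lambda>p. (\<Prod>l\<in>L. tu p - l) * r p) = scal c (\<lambda>p. if p \<in> S then r p else 0)"
    proof
      fix q
      show "(\<Prod>l\<in>L. tu q - l) * r q = scal c (\<lambda>p. if p \<in> S then r p else 0) q"
      proof (cases "r q = 0")
        case True then show ?thesis by (simp add: scal_def)
      next
        case False
        show ?thesis
        proof (cases "tu q = tu u0")
          case True then show ?thesis using False by (simp add: scal_def S_def Sp_def c_def)
        next
          case F2: False
          have "tu q \<in> L" using False F2 unfolding L_def Sp_def by auto
          then have "(\<Prod>l\<in>L. tu q - l) = 0" using finL
            by (metis (no_types, lifting) prod_zero_iff right_minus_eq)
          then show ?thesis using F2 by (simp add: scal_def S_def)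
        qed
      qed
    qed
    have "scal (1/c) (scal c (\<lambda>p. if p \<in> S then r p else 0)) \<in> I"
      using gI geq id unfolding is_ideal_def by metis
    moreover have "scal (1/c) (scal c (\<lambda>p. if p \<in> S then r p else 0)) = (\<lambda>p. if p \<in> S then r p else 0)"
      using c0 by (auto simp: scal_def fun_eq_iff)
    ultimately have resI: "(\<lambda>p. if p \<in> S then r p else 0) \<in> I" by simp
    have "u0 \<in> S" using u0 unfolding S_def Sp_def by auto
    then have "S \<noteq> {}" by blast
    moreover have "S \<subseteq> {p. r p \<noteq> 0}" unfolding S_def Sp_def by auto
    ultimately have "\<not> S \<subset> {p. r p \<noteq> 0}" using resI mr unfolding minimal_relation_def by blast
    then have "S = Sp" using \<open>S \<subseteq> {p. r p \<noteq> 0}\<close> unfolding Sp_def by blast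
    then show ?thesis using p unfolding S_def Sp_def by blast
  qed
  have "minrel_pairs I \<subseteq> E"
  proof
    fix x assume "x \<in> minrel_pairs I"
    then obtain a b r where x: "x = (a, b)" and mr: "minimal_relation I r" and "r a \<noteq> 0" "r b \<noteq> 0"
      unfolding minrel_pairs_def by blast
    have ra: "r \<in> path_alg V A s t" using mr id unfolding minimal_relation_def is_ideal_def by blast
    have "a \<in> paths V A s t" "b \<in> paths V A s t" using ra \<open>r a \<noteq> 0\<close> \<open>r b \<noteq> 0\<close>
      unfolding path_alg_def by blast+
    moreover have "tu a = tu b" using key[OF mr \<open>r b \<noteq> 0\<close> \<open>r a \<noteq> 0\<close>] .
    ultimately show "x \<in> E" using x unfolding E_def by auto
  qed
  then have "equiv_I V A s t I \<subseteq> E" using eqE unfolding equiv_I_def by blast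
  then show ?thesis using assms(7) unfolding E_def by auto
qed

end
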